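(* There is a constant $C\ge1$ such that for every positive integer $n$ and all real $x>n_*$, $y>-n_*$, \[ C^{-1}B(x,y)\le q(x,y)\le C\,B(x,y),\qquad B(x,y)=\sqrt{\frac{x-n_*}{n_*+y}}\cdot\Big|\frac1{x-y}\log\frac{x+2n}{y+2n}\Big|, \] where $\frac1{x-y}\log\frac{x+2n}{y+2n}$ is given its continuous value $\frac1{x+2n}$ at $y=x$.
   Context: $n_*=n-\tfrac12$. For real $x>0$, $s<0$, $h^-_x(s)=\dfrac{\sqrt x}{\pi(x-s)\sqrt{-s}}$ (hitting density of the negative half-line for planar Brownian motion from $x$), and for $x<0$, $s>0$, $h^+_x(s)=h^-_{-x}(-s)=\dfrac{\sqrt{-x}}{\pi(s-x)\sqrt{s}}$. For real $x>n_*$, $y>-n_*$, $q(x,y)=\int_{-\infty}^{-n_*}h^-_{x-n_*}(u-n_* )\,h^+_{u+n_*}(y+n_* )\,du$. *)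

theory Defs
  imports "HOL-Analysis.Analysis"
begin

definition nstar :: "nat \<Rightarrow> real" where
  "nstar n = real n - 1/2"

text \<open>Hitting density of the negative half-line from x > 0, evaluated at s < 0.\<close>
definition hminus :: "real \<Rightarrow> real \<Rightarrow> real" where
  "hminus x s = sqrt x / (pi * (x - s) * sqrt (- s))"

text \<open>Hitting density of the positive half-line from x < 0, evaluated at s > 0.\<close>
definition hplus :: "real \<Rightarrow> real \<Rightarrow> real" where
  "hplus x s = sqrt (- x) / (pi * (s - x) * sqrt s)"

definition qker :: "nat \<Rightarrow> real \<Rightarrow> real \<Rightarrow> real" where
  "qker n x y = (LINT u:{..< - nstar n}|lborel.
      hminus (x - nstar n) (u - nstar n) * hplus (u + nstar n) (y + nstar n))"

definition logratio :: "nat \<Rightarrow> real \<Rightarrow> real \<Rightarrow> real" where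
  "logratio n x y = (if y = x then 1 / (x + 2 * real n)
     else ln ((x + 2 * real n) / (y + 2 * real n)) / (x - y))"

definition Bfun :: "nat \<Rightarrow> real \<Rightarrow> real \<Rightarrow> real" where
  "Bfun n x y = sqrt ((x - nstar n) / (nstar n + y)) * \<bar>logratio n x y\<bar>"

end

theory Submission
  imports Defs "HOL-Real_Asymp.Real_Asymp"
begin


definition lr :: "real \<Rightarrow> real \<Rightarrow> real" where
  "lr p q = (if p = q then 1 / p else ln (p / q) / (p - q))"

lemma ray_int:
  fixes P Q d :: real
  assumes P: "P > 0" and Q: "Q > 0" and d: "d \<ge> 0"
  shows "set_integrable lborel {d<..} (\<lambda>t. 1 / ((P + t) * (Q + t)))"
    "(LINT t:{d<..}|lborel. 1 / ((P + t) * (Q + t))) = lr (P + d) (Q + d)"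
proof -
  define F where "F = (if P = Q then (\<lambda>t::real. - 1 / (P + t))
     else (\<lambda>t. (ln (Q + t) - ln (P + t)) / (P - Q)))"
  have D: "DERIV F t :> 1 / ((P + t) * (Q + t))" if "ereal d < ereal t" for t
  proof -
    from that have t: "t > d" by simp
    have pos: "P + t > 0" "Q + t > 0" using t P Q d by auto
    show ?thesis
    proof (cases "P = Q")
      case True
      then show ?thesis unfolding F_def using pos
        by (auto intro!: derivative_eq_intros simp: power2_eq_square field_simps)
    next
      case False
      have e0: "1/(Q+t) - 1/(P+t) = (P-Q)/((P+t)*(Q+t))"
        using pos by (simp add: field_simps)
      have e: "(1/(Q+t) - 1/(P+t))/(P-Q) = 1 / ((P + t) * (Q + t))"
        unfolding e0 using False by simp
      have "DERIV F t :> (1/(Q+t) - 1/(P+t))/(P-Q)"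
        unfolding F_def using pos False
        apply (simp)
        apply (rule derivative_eq_intros refl | simp)+
        done
      then show ?thesis using e by simp
    qed
  qed
  have C: "isCont (\<lambda>t. 1 / ((P + t) * (Q + t))) t" if "ereal d < ereal t" for t
    using that P Q d by (auto intro!: continuous_intros simp: add_pos_pos)
  have cF: "isCont F d"
    unfolding F_def using P Q d by (auto intro!: continuous_intros)
  have A: "((F \<circ> real_of_ereal) \<longlongrightarrow> F d) (at_right (ereal d))"
    unfolding ereal_tendsto_simps using cF
    by (simp add: isCont_def filterlim_at_split)
  have B: "((F \<circ> real_of_ereal) \<longlongrightarrow> 0) (at_left \<infinity>)"
    unfolding ereal_tendsto_simps F_def using P Q
    by (cases "P = Q") (simp_all, real_asymp+)
  have nn: "AE x in lborel. ereal d < ereal x \<longrightarrow> ereal x < \<infinity> \<longrightarrow> 0 \<le> 1 / ((P + x) * (Q + x))"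
    using P Q d by (auto intro!: AE_I2)
  note R = interval_integral_FTC_nonneg[where a="ereal d" and b=\<infinity>, OF _ D C nn A B]
  show "set_integrable lborel {d<..} (\<lambda>t. 1 / ((P + t) * (Q + t)))"
    using R(1) by simp
  have "(LINT t:{d<..}|lborel. 1 / ((P + t) * (Q + t))) = - F d"
    using R(2) by (simp add: interval_integral_to_infinity_eq)
  also have "\<dots> = lr (P + d) (Q + d)"
    unfolding F_def lr_def using P Q d
    by (auto simp: ln_div field_simps)
  finally show "(LINT t:{d<..}|lborel. 1 / ((P + t) * (Q + t))) = lr (P + d) (Q + d)" .
qed


lemma fin_int:
  fixes F f :: "real \<Rightarrow> real" and lo hi :: real
  assumes "lo < hi"
  assumes F: "\<And>t. lo < t \<Longrightarrow> t < hi \<Longrightarrow> DERIV F t :> f t"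
  assumes f: "\<And>t. lo < t \<Longrightarrow> t < hi \<Longrightarrow> isCont f t"
  assumes nn: "\<And>t. lo < t \<Longrightarrow> t < hi \<Longrightarrow> 0 \<le> f t"
  assumes clo: "isCont F lo" and chi: "isCont F hi"
  shows "set_integrable lborel {lo<..<hi} f"
    "(LINT t:{lo<..<hi}|lborel. f t) = F hi - F lo"
proof -
  have A: "((F \<circ> real_of_ereal) \<longlongrightarrow> F lo) (at_right (ereal lo))"
    unfolding ereal_tendsto_simps using clo
    by (simp add: isCont_def filterlim_at_split)
  have B: "((F \<circ> real_of_ereal) \<longlongrightarrow> F hi) (at_left (ereal hi))"
    unfolding ereal_tendsto_simps using chi
    by (simp add: isCont_def filterlim_at_split)
  have nn': "AE x in lborel. ereal lo < ereal x \<longrightarrow> ereal x < ereal hi \<longrightarrow> 0 \<le> f x"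
    using nn by (auto intro!: AE_I2)
  note R = interval_integral_FTC_nonneg[where a="ereal lo" and b="ereal hi", OF _ _ _ nn' A B]
  show "set_integrable lborel {lo<..<hi} f"
    using R(1) assms by simp
  show "(LINT t:{lo<..<hi}|lborel. f t) = F hi - F lo"
    using R(2) assms by (simp add: interval_lebesgue_integral_le_eq)
qed

lemma lr_pos: "p > 0 \<Longrightarrow> q > 0 \<Longrightarrow> lr p q \<ge> 1 / (p + q)"
proof -
  assume p: "p > 0" and q: "q > 0"
  show ?thesis
  proof (cases "p = q")
    case True then show ?thesis using p by (simp add: lr_def field_simps)
  next
    case False
    show ?thesis
    proof (cases "p > q")
      case True
      have "ln (q/p) \<le> q/p - 1" using p q by (intro ln_le_minus_one) simp
      then have "ln (p/q) \<ge> (p - q)/p" using p q by (simp add: ln_div field_simps)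
      then have "ln (p/q) / (p - q) \<ge> 1/p" using True p by (simp add: field_simps)
      moreover have "1/p \<ge> 1/(p+q)" using p q by (simp add: frac_le)
      ultimately show ?thesis using False by (simp add: lr_def)
    next
      case f2: False
      then have lt: "p < q" using False by simp
      have "ln (p/q) \<le> p/q - 1" using p q by (intro ln_le_minus_one) simp
      then have "ln (p/q) \<le> (p - q)/q" using p q by (simp add: field_simps)
      then have "ln (p/q) / (p - q) \<ge> 1/q" using lt q by (simp add: field_simps)
      moreover have "1/q \<ge> 1/(p+q)" using p q by (simp add: frac_le)
      ultimately show ?thesis using False by (simp add: lr_def)
    qed
  qed
qed

lemma g_le_k1:
  fixes t A m b :: real
  assumes "0 < t" "0 < A" "0 < m" "0 < b"
  shows "sqrt t / (sqrt (t+m) * ((A+t)*(b+t))) \<le> 1/(A* sqrt m* sqrt t)"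
proof -
  have w: "A* sqrt m*t \<le> sqrt (t+m) * ((A+t)*(b+t))"
  proof -
    have "sqrt m \<le> sqrt (t+m)" using assms by simp
    moreover have "A * t \<le> (A+t)*(b+t)" using assms by (intro mult_mono) auto
    ultimately have "sqrt m * (A*t) \<le> sqrt (t+m) * ((A+t)*(b+t))"
      using assms by (intro mult_mono) auto
    then show ?thesis by (simp add: mult_ac)
  qed
  have "sqrt t / (sqrt (t+m) * ((A+t)*(b+t))) \<le> sqrt t / (A* sqrt m*t)"
    using w assms by (intro frac_le) auto
  also have "\<dots> = 1/(A* sqrt m* sqrt t)"
  proof -
    have e: "t = sqrt t * sqrt t" using assms by simp
    have "sqrt t > 0" "sqrt m > 0" using assms by auto
    then have "sqrt t / (A * sqrt m * (sqrt t * sqrt t)) = 1/(A * sqrt m * sqrt t)"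
      using assms by (simp add: field_simps)
    then show ?thesis using e by metis
  qed
  finally show ?thesis .
qed

lemma g_le_k2:
  fixes t A m b :: real
  assumes "0 < t" "0 < A" "0 < m" "0 < b"
  shows "sqrt t / (sqrt (t+m) * ((A+t)*(b+t))) \<le> 1/(A*b)"
proof -
  have w: "sqrt t * (A*b) \<le> sqrt (t+m) * ((A+t)*(b+t))"
    using assms by (intro mult_mono) (auto intro!: mult_mono)
  have "sqrt t / (sqrt (t+m) * ((A+t)*(b+t))) \<le> sqrt t / (sqrt t * (A*b))"
    using w assms by (intro frac_le) auto
  also have "\<dots> = 1/(A*b)" using assms by simp
  finally show ?thesis .
qed

lemma g_le_h:
  fixes t A m b :: real
  assumes "0 < t" "0 < A" "0 < m" "0 < b"
  shows "sqrt t / (sqrt (t+m) * ((A+t)*(b+t))) \<le> 1/((A+t)*(b+t))"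
proof -
  have r: "sqrt t / sqrt (t+m) \<le> 1" using assms by simp
  have "sqrt t / (sqrt (t+m) * ((A+t)*(b+t))) = (sqrt t / sqrt (t+m)) * (1/((A+t)*(b+t)))"
    by simp
  also have "\<dots> \<le> 1 * (1/((A+t)*(b+t)))"
    using r assms by (intro mult_right_mono) auto
  finally show ?thesis by simp
qed

lemma g_ge_h:
  fixes t A m b :: real
  assumes "0 < t" "0 < A" "0 < m" "0 < b" "m \<le> 3*t"
  shows "1/(2*((A+t)*(b+t))) \<le> sqrt t / (sqrt (t+m) * ((A+t)*(b+t)))"
proof -
  have s: "sqrt (t+m) \<le> 2 * sqrt t"
  proof -
    have "sqrt (t+m) \<le> sqrt (4*t)" using assms by simp
    also have "sqrt (4*t) = 2 * sqrt t" by (simp add: real_sqrt_mult)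
    finally show ?thesis .
  qed
  have "1/(2*((A+t)*(b+t))) = sqrt t / (2 * sqrt t * ((A+t)*(b+t)))" using assms by simp
  also have "\<dots> \<le> sqrt t / (sqrt (t+m) * ((A+t)*(b+t)))"
    using s assms by (intro divide_left_mono mult_right_mono) (auto intro!: mult_pos_pos)
  finally show ?thesis .
qed



lemma main_bounds:
  fixes n :: nat and x y :: real
  assumes n: "n \<ge> 1" and x: "x > nstar n" and y: "y > - nstar n"
  shows "Bfun n x y / 20 \<le> qker n x y \<and> qker n x y \<le> 20 * Bfun n x y"
proof -
  define m where "m = 2 * real n - 1"
  define c where "c = real n + 1/2"
  define A where "A = x + real n - 1/2"
  define b where "b = y + real n - 1/2"
  define a where "a = x - nstar n"
  define g where "g t = sqrt t / (sqrt (t+m) * ((A+t)*(b+t)))" for t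
  define h where "h t = 1/((A+t)*(b+t))" for t
  define L where "L = lr (A+c) (b+c)"
  define K0 where "K0 = sqrt a / (pi^2 * sqrt b)"
  define I where "I = (\<integral>t. indicator {0<..} t * g t \<partial>lborel)"
  have n1: "real n \<ge> 1" using n by simp
  have m1: "m \<ge> 1" using n1 by (simp add: m_def)
  have apos: "a > 0" using x by (simp add: a_def)
  have bpos: "b > 0" using y by (simp add: b_def nstar_def)
  have Am: "A > m" using x by (simp add: A_def m_def nstar_def)
  have Apos: "A > 0" using Am m1 by simp
  have cpos: "c > 0" by (simp add: c_def)
  have c3A: "2 * c < 3 * A" using Am n1 by (simp add: c_def m_def)
  have m3c: "m \<le> 3 * c" using n1 by (simp add: c_def m_def)
  have gnn: "g t \<ge> 0" if "t > 0" for t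
    using that m1 Apos bpos by (simp add: g_def)
  have hnn: "h t \<ge> 0" if "t > 0" for t
    using that Apos bpos by (simp add: h_def)
  have Lpos: "L \<ge> 1/(A+b+2*c)"
  proof -
    have e: "(A+c)+(b+c) = A+b+2*c" by simp
    have "lr (A+c) (b+c) \<ge> 1/((A+c)+(b+c))" using Apos bpos cpos by (intro lr_pos) auto
    then show ?thesis unfolding L_def e .
  qed
  have Lpos': "L > 0"
  proof -
    have "1/(A+b+2*c) > 0" using Apos bpos cpos by simp
    then show ?thesis using Lpos by linarith
  qed
  have hint: "integrable lborel (\<lambda>t. indicator {c<..} t * h t)"
    using ray_int(1)[OF Apos bpos less_imp_le[OF cpos]]
    by (simp add: set_integrable_def h_def)
  have hval: "(\<integral>t. indicator {c<..} t * h t \<partial>lborel) = L"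
    using ray_int(2)[OF Apos bpos less_imp_le[OF cpos]]
    by (simp add: set_lebesgue_integral_def h_def L_def)
  obtain k V where kint: "integrable lborel (\<lambda>t. indicator {0<..<2*c} t * k t)"
    and kval: "(\<integral>t. indicator {0<..<2*c} t * k t \<partial>lborel) = V"
    and gk: "\<And>t. 0 < t \<Longrightarrow> t \<le> c \<Longrightarrow> g t \<le> k t"
    and knn: "\<And>t. 0 < t \<Longrightarrow> t < 2*c \<Longrightarrow> k t \<ge> 0"
    and VL: "V \<le> 18 * L"
  proof (cases "b \<le> A")
    case True
    define k where "k t = 1/(A * sqrt m * sqrt t)" for t
    define F where "F t = 2 * sqrt t / (A * sqrt m)" for t
    have D: "DERIV F t :> k t" if "0 < t" "t < 2*c" for t
    proof -
      have "DERIV F t :> 2 * (inverse (sqrt t) / 2) / (A * sqrt m)"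
        unfolding F_def using that Apos m1
        by (auto intro!: derivative_eq_intros)
      moreover have "2 * (inverse (sqrt t) / 2) / (A * sqrt m) = k t"
        using that by (simp add: k_def field_simps)
      ultimately show ?thesis by simp
    qed
    have C: "isCont k t" if "0 < t" "t < 2*c" for t
      unfolding k_def using that Apos m1 by (auto intro!: continuous_intros)
    have NN: "0 \<le> k t" if "0 < t" "t < 2*c" for t
      unfolding k_def using that Apos m1 by auto
    have CF: "isCont F t" for t unfolding F_def using Apos m1 bpos by (auto intro!: continuous_intros)
    note R = fin_int[of 0 "2*c" F k, OF _ D C NN CF CF]
    have V: "V = 2 * sqrt (2*c) / (A * sqrt m)" if "V = F (2*c) - F 0" for V
      using that by (simp add: F_def)
    have s: "sqrt (2*c) \<le> 9/5 * sqrt m"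
    proof -
      have "9/5 * sqrt m = sqrt ((9/5)^2 * m)" by (simp add: real_sqrt_mult)
      moreover have "2*c \<le> (9/5)^2 * m" using n1 by (simp add: c_def m_def power2_eq_square)
      ultimately show ?thesis by simp
    qed
    have "2 * sqrt (2*c) / (A * sqrt m) \<le> 2 * (9/5 * sqrt m) / (A * sqrt m)"
      using s Apos m1 by (intro divide_right_mono) auto
    also have "\<dots> = 18 / (5 * A)" using m1 by (simp add: field_simps)
    also have "\<dots> \<le> 18 / (A + b + 2*c)"
      using True c3A Apos bpos cpos by (intro divide_left_mono) auto
    also have "\<dots> \<le> 18 * L" using Lpos by simp
    finally have VL: "2 * sqrt (2*c) / (A * sqrt m) \<le> 18 * L" .
    show ?thesis
    proof (rule that[of k "F (2*c) - F 0"])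
      show "integrable lborel (\<lambda>t. indicator {0<..<2*c} t * k t)"
        using R(1) cpos by (simp add: set_integrable_def)
      show "(\<integral>t. indicator {0<..<2*c} t * k t \<partial>lborel) = F (2*c) - F 0"
        using R(2) cpos by (simp add: set_lebesgue_integral_def)
      show "g t \<le> k t" if "0 < t" "t \<le> c" for t
        using g_le_k1[of t A m b] that Apos m1 bpos by (simp add: g_def k_def)
      show "k t \<ge> 0" if "0 < t" "t < 2*c" for t using NN that by simp
      show "F (2*c) - F 0 \<le> 18 * L" using VL by (simp add: F_def)
    qed
  next
    case False
    define k where "k t = 1/(A * b)" for t :: real
    define F where "F t = t / (A * b)" for t
    have D: "DERIV F t :> k t" if "0 < t" "t < 2*c" for t
      unfolding F_def k_def using Apos bpos by (auto intro!: derivative_eq_intros)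
    have C: "isCont k t" if "0 < t" "t < 2*c" for t
      unfolding k_def by simp
    have NN: "0 \<le> k t" if "0 < t" "t < 2*c" for t
      unfolding k_def using Apos bpos by auto
    have CF: "isCont F t" for t unfolding F_def using Apos m1 bpos by (auto intro!: continuous_intros)
    note R = fin_int[of 0 "2*c" F k, OF _ D C NN CF CF]
    have prod: "2*c * (A+b+2*c) \<le> (3*A) * (5*b)"
    proof -
      have h2: "A+b+2*c \<le> 5*b" using False c3A by linarith
      have h1: "2*c \<le> 3*A" using c3A by linarith
      have "0 \<le> 3*A" "0 \<le> A+b+2*c" using Apos bpos cpos by auto
      from mult_mono[OF h1 h2 this] show ?thesis .
    qed
    have "2*c/(A*b) \<le> 18/(A+b+2*c)"
      using prod Apos bpos cpos mult_pos_pos[OF Apos bpos] by (simp add: divide_simps, linarith)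
    also have "\<dots> \<le> 18 * L" using Lpos by simp
    finally have VL: "2*c/(A*b) \<le> 18 * L" .
    show ?thesis
    proof (rule that[of k "F (2*c) - F 0"])
      show "integrable lborel (\<lambda>t. indicator {0<..<2*c} t * k t)"
        using R(1) cpos by (simp add: set_integrable_def)
      show "(\<integral>t. indicator {0<..<2*c} t * k t \<partial>lborel) = F (2*c) - F 0"
        using R(2) cpos by (simp add: set_lebesgue_integral_def)
      show "g t \<le> k t" if "0 < t" "t \<le> c" for t
        using g_le_k2[of t A m b] that Apos m1 bpos by (simp add: g_def k_def)
      show "k t \<ge> 0" if "0 < t" "t < 2*c" for t using NN that by simp
      show "F (2*c) - F 0 \<le> 18 * L" using VL by (simp add: F_def)
    qed
  qed
  have pw: "indicator {0<..} t * g t \<le> indicator {0<..<2*c} t * k t + indicator {c<..} t * h t" for t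
  proof (cases "t > 0")
    case False then show ?thesis
      using knn hnn cpos by (auto simp: indicator_def)
  next
    case True
    show ?thesis
    proof (cases "t \<le> c")
      case True
      then show ?thesis using \<open>t > 0\<close> gk[of t] cpos by (auto simp: indicator_def)
    next
      case False
      have "g t \<le> h t" using g_le_h[of t A m b] \<open>t > 0\<close> Apos m1 bpos
        by (simp add: g_def h_def)
      then show ?thesis using False \<open>t > 0\<close> knn[of t] by (auto simp: indicator_def)
    qed
  qed
  have meas: "(\<lambda>t. indicator {0<..} t * g t) \<in> borel_measurable lborel"
    unfolding g_def by measurable
  have sumint: "integrable lborel (\<lambda>t. indicator {0<..<2*c} t * k t + indicator {c<..} t * h t)"
    using kint hint by simp
  have gint: "integrable lborel (\<lambda>t. indicator {0<..} t * g t)"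
  proof (rule Bochner_Integration.integrable_bound[OF sumint meas])
    show "AE t in lborel. norm (indicator {0<..} t * g t) \<le>
        norm (indicator {0<..<2*c} t * k t + indicator {c<..} t * h t)"
    proof (rule AE_I2)
      fix t
      have "0 \<le> indicator {0<..} t * g t" using gnn by (auto simp: indicator_def)
      then show "norm (indicator {0<..} t * g t) \<le>
        norm (indicator {0<..<2*c} t * k t + indicator {c<..} t * h t)"
        using pw[of t] by simp
    qed
  qed
  have Iup: "I \<le> 19 * L"
  proof -
    have "I \<le> (\<integral>t. indicator {0<..<2*c} t * k t + indicator {c<..} t * h t \<partial>lborel)"
      unfolding I_def using gint sumint pw by (intro integral_mono) auto
    also have "\<dots> = V + L" using kint hint kval hval by simp
    finally show ?thesis using VL by simp
  qed
  have Ilo: "L / 2 \<le> I"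
  proof -
    have "L / 2 = (\<integral>t. indicator {c<..} t * h t / 2 \<partial>lborel)"
      using hval by simp
    also have "\<dots> \<le> I" unfolding I_def
    proof (intro integral_mono)
      show "integrable lborel (\<lambda>t. indicator {c<..} t * h t / 2)" using hint by simp
      show "integrable lborel (\<lambda>t. indicator {0<..} t * g t)" using gint .
      fix t
      show "indicator {c<..} t * h t / 2 \<le> indicator {0<..} t * g t"
      proof (cases "t > c")
        case True
        have "h t / 2 \<le> g t" using g_ge_h[of t A m b] True cpos Apos m1 bpos m3c
          by (simp add: g_def h_def mult.commute)
        then show ?thesis using True cpos by (auto simp: indicator_def)
      next
        case False then show ?thesis using gnn by (auto simp: indicator_def)
      qed
    qed
    finally show ?thesis .
  qed
  define f where "f u = hminus (x - nstar n) (u - nstar n) * hplus (u + nstar n) (y + nstar n)" for u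
  have fq: "f (- nstar n + -1 * s) = K0 * g s" if "s > 0" for s
  proof -
    have e1: "(- nstar n + -1 * s) - nstar n = -(s + m)" by (simp add: nstar_def m_def)
    have e2: "(- nstar n + -1 * s) + nstar n = -s" by simp
    have e3: "y + nstar n = b" by (simp add: nstar_def b_def)
    have e4: "x - nstar n - (-(s+m)) = A + s" by (simp add: nstar_def m_def A_def)
    have e5: "b - - s = b + s" by simp
    have "f (- nstar n + -1 * s) = sqrt a / (pi * (A + s) * sqrt (s + m)) * (sqrt s / (pi * (b + s) * sqrt b))"
      unfolding f_def e1 e2 e3 hminus_def hplus_def e4 e5 a_def by simp
    also have "\<dots> = K0 * g s"
      unfolding K0_def g_def using that apos bpos Apos m1
      by (simp add: field_simps power2_eq_square)
    finally show ?thesis .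
  qed
  have pt: "indicator {..< - nstar n} (- nstar n + -1 * s) * f (- nstar n + -1 * s) = K0 * (indicator {0<..} s * g s)" for s
  proof (cases "s > 0")
    case True
    have "- nstar n + -1 * s \<in> {..< - nstar n}" using True by simp
    then show ?thesis using fq[OF True] True by simp
  next
    case False
    have "- nstar n + -1 * s \<notin> {..< - nstar n}" using False by simp
    then show ?thesis using False by simp
  qed
  have qI: "qker n x y = K0 * I"
  proof -
    have "qker n x y = (\<integral>u. indicator {..< - nstar n} u * f u \<partial>lborel)"
      unfolding qker_def set_lebesgue_integral_def f_def by simp
    also have "\<dots> = \<bar>-1\<bar> *\<^sub>R (\<integral>s. indicator {..< - nstar n} (- nstar n + -1 * s) * f (- nstar n + -1 * s) \<partial>lborel)"
      by (rule lborel_integral_real_affine) simp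
    also have "\<dots> = (\<integral>s. K0 * (indicator {0<..} s * g s) \<partial>lborel)"
      by (simp only: pt) simp
    also have "\<dots> = K0 * I" unfolding I_def by simp
    finally show ?thesis .
  qed
  have BL: "Bfun n x y = sqrt a / sqrt b * L"
  proof -
    have "logratio n x y = L"
      unfolding logratio_def L_def lr_def A_def b_def c_def by (auto simp: algebra_simps)
    moreover have "nstar n + y = b" by (simp add: nstar_def b_def)
    ultimately show ?thesis unfolding Bfun_def a_def using Lpos' by (simp add: real_sqrt_divide)
  qed
  define S where "S = sqrt a / sqrt b"
  have Spos: "S > 0" using apos bpos by (simp add: S_def)
  have K0S: "K0 = S / pi^2" by (simp add: K0_def S_def)
  have pi2: "1 \<le> pi^2" "pi^2 \<le> 10"
  proof -
    have p1: "3 \<le> pi" "pi \<le> 3.15" using pi_approx by auto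
    have "pi*pi \<le> 3.15*3.15" using mult_mono[OF p1(2) p1(2)] p1 by simp
    then show "pi^2 \<le> 10" by (simp add: power2_eq_square)
    have "1*1 \<le> pi*pi" using mult_mono[of 1 pi 1 pi] p1 by simp
    then show "1 \<le> pi^2" by (simp add: power2_eq_square)
  qed
  have up: "qker n x y \<le> 20 * Bfun n x y"
  proof -
    have "qker n x y = S / pi^2 * I" using qI K0S by simp
    also have "\<dots> \<le> S / pi^2 * (19 * L)" using Iup Spos by (intro mult_left_mono) auto
    also have "\<dots> \<le> S * (19 * L)" using pi2 Spos Lpos'
      by (intro mult_right_mono) (auto simp: divide_le_eq)
    also have "\<dots> \<le> 20 * (S * L)" using Spos Lpos' by simp
    finally show ?thesis using BL by (simp add: S_def)
  qed
  have lo: "Bfun n x y / 20 \<le> qker n x y"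
  proof -
    have "Bfun n x y / 20 = S * L / 20" using BL by (simp add: S_def)
    also have "\<dots> \<le> S * L / (2 * pi^2)"
      using pi2 Spos Lpos' by (intro divide_left_mono) auto
    also have "\<dots> = S / pi^2 * (L / 2)" by simp
    also have "\<dots> \<le> S / pi^2 * I" using Ilo Spos by (intro mult_left_mono) auto
    also have "\<dots> = qker n x y" using qI K0S by simp
    finally show ?thesis .
  qed
  show ?thesis using up lo by simp
qed


theorem mainTheorem12:
  shows "\<exists>C::real. C \<ge> 1 \<and>
    (\<forall>n::nat. n \<ge> 1 \<longrightarrow> (\<forall>x y::real. x > nstar n \<longrightarrow> y > - nstar n \<longrightarrow>
       Bfun n x y / C \<le> qker n x y \<and> qker n x y \<le> C * Bfun n x y))"
proof -
  have "\<forall>n::nat. n \<ge> 1 \<longrightarrow> (\<forall>x y::real. x > nstar n \<longrightarrow> y > - nstar n \<longrightarrow>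
       Bfun n x y / 20 \<le> qker n x y \<and> qker n x y \<le> 20 * Bfun n x y)"
    using main_bounds by blast
  then show ?thesis by (intro exI[of _ "20::real"]) simp
qed

end
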